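(* Let $k\ge2$, $1\le m<k$, and alternatives $\ell=1,\dots,k$ with i.i.d. replications (independent across alternatives) whose means are pairwise distinct and ordered $\mu_{\langle 1\rangle}>\dots>\mu_{\langle k\rangle}$, satisfying Assumptions 1–4 of the context. Let $i\in\{1,\dots,m\}$, $j\in\{m+1,\dots,k\}$ and $r_{\langle i\rangle},r_{\langle j\rangle}>0$. Then the function $x\mapsto r_{\langle i\rangle}\Lambda^*_{\langle i\rangle}(x)+r_{\langle j\rangle}\Lambda^*_{\langle j\rangle}(x)$ has a unique infimum (minimizing) point.
   Context: $\bar X_\ell(n)$ is the sample mean of $n$ replications of alternative $\ell$, $\Lambda^{(n)}_\ell(\lambda)=\log\mathbb E[e^{\lambda\bar X_\ell(n)}]$. Assumption 1: $\Lambda_\ell(\lambda)=\lim_{n\to\infty}\frac1n\Lambda^{(n)}_\ell(n\lambda)$ exists as an extended real number for all $\lambda$. With $\mathcal D_{\Lambda_\ell}=\{\lambda:\Lambda_\ell(\lambda)<\infty\}$, interior $\mathcal D^o_{\Lambda_\ell}$, and $\mathcal F_\ell=\{\Lambda'_\ell(\lambda):\lambda\in\mathcal D^o_{\Lambda_\ell}\}$, interior $\mathcal F^o_\ell$: Assumption 2: $0\in\mathcal D^o_{\Lambda_\ell}$. Assumption 3: $\Lambda_\ell$ strictly convex, continuous on $\mathcal D^o_{\Lambda_\ell}$ and steep ($|\Lambda'_\ell(\lambda_n)|\to\infty$ along sequences tending to a boundary point of $\mathcal D^o_{\Lambda_\ell}$). Assumption 4: $[\mu_{\langle k\rangle},\mu_{\langle1\rangle}]\subset\bigcap_\ell\mathcal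 F^o_\ell$. $\Lambda^*_\ell(x)=\sup_\lambda\{\lambda x-\Lambda_\ell(\lambda)\}$. *)

theory Defs
  imports "HOL-Probability.Probability"
begin

definition sample_mean :: "(nat \<Rightarrow> nat \<Rightarrow> 'a \<Rightarrow> real) \<Rightarrow> nat \<Rightarrow> nat \<Rightarrow> 'a \<Rightarrow> real" where
  "sample_mean X l n \<omega> = (\<Sum>t<n. X l t \<omega>) / real n"

definition log_mgf :: "'a measure \<Rightarrow> ('a \<Rightarrow> real) \<Rightarrow> real \<Rightarrow> ereal" where
  "log_mgf M Y lam =
     (let I = (\<integral>\<^sup>+ \<omega>. ennreal (exp (lam * Y \<omega>)) \<partial>M)
      in if I = \<infinity> then \<infinity> else ereal (ln (enn2real I)))"

definition Lambda_n :: "'a measure \<Rightarrow> (nat \<Rightarrow> nat \<Rightarrow> 'a \<Rightarrow> real) \<Rightarrow> nat \<Rightarrow> nat \<Rightarrow> real \<Rightarrow> ereal" where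
  "Lambda_n M X l n lam = log_mgf M (sample_mean X l n) lam"

definition eff_dom :: "(real \<Rightarrow> ereal) \<Rightarrow> real set" where
  "eff_dom L = {lam. L lam < \<infinity>}"

definition strictly_convex_on :: "real set \<Rightarrow> (real \<Rightarrow> real) \<Rightarrow> bool" where
  "strictly_convex_on S f \<longleftrightarrow> convex S \<and>
     (\<forall>x\<in>S. \<forall>y\<in>S. x \<noteq> y \<longrightarrow> (\<forall>u::real. 0 < u \<longrightarrow> u < 1 \<longrightarrow>
        f (u * x + (1 - u) * y) < u * f x + (1 - u) * f y))"

definition steep :: "(real \<Rightarrow> real) \<Rightarrow> real set \<Rightarrow> bool" where
  "steep f S \<longleftrightarrow> (\<forall>s b. (\<forall>n. s n \<in> S) \<longrightarrow> s \<longlonglongrightarrow> b \<longrightarrow> b \<in> frontier S \<longrightarrow>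
        filterlim (\<lambda>n. \<bar>deriv f (s n)\<bar>) at_top sequentially)"

definition legendre :: "(real \<Rightarrow> ereal) \<Rightarrow> real \<Rightarrow> ereal" where
  "legendre L x = (SUP lam. ereal (lam * x) - L lam)"

end

theory Submission
  imports Defs
begin

lemma log_mgf_zero:
  assumes "prob_space M"
  shows "log_mgf M Y 0 = 0"
proof -
  interpret prob_space M by fact
  have "(\<integral>\<^sup>+ \<omega>. ennreal (exp (0 * Y \<omega>)) \<partial>M) = 1"
    by (simp add: emeasure_space_1)
  then show ?thesis by (simp add: log_mgf_def zero_ereal_def)
qed

lemma log_mgf_not_minf: "log_mgf M Y a \<noteq> -\<infinity>"
  by (simp add: log_mgf_def Let_def)

lemma log_mgf_lower:
  assumes "prob_space M" and int: "integrable M Y"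
  shows "ereal (a * prob_space.expectation M Y) \<le> log_mgf M Y a"
proof -
  interpret prob_space M by fact
  define I where "I = (\<integral>\<^sup>+ \<omega>. ennreal (exp (a * Y \<omega>)) \<partial>M)"
  show ?thesis
  proof (cases "I = \<infinity>")
    case True then show ?thesis by (simp add: log_mgf_def I_def[symmetric])
  next
    case False
    have meas: "Y \<in> borel_measurable M" using int by auto
    have ie: "integrable M (\<lambda>\<omega>. exp (a * Y \<omega>))"
      apply (rule integrableI_bounded)
      using meas False by (auto simp: I_def top.not_eq_extremum)
    have "I = ennreal (expectation (\<lambda>\<omega>. exp (a * Y \<omega>)))"
      unfolding I_def by (rule nn_integral_eq_integral[OF ie]) auto
    then have e: "enn2real I = expectation (\<lambda>\<omega>. exp (a * Y \<omega>))"
      by (simp add: enn2real_ennreal integral_nonneg_AE)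
    have "exp (expectation (\<lambda>\<omega>. a * Y \<omega>)) \<le> expectation (\<lambda>\<omega>. exp (a * Y \<omega>))"
      apply (rule jensens_inequality[where I=UNIV and q=exp])
      using int ie convex_on_exp[of 1] by auto
    then have "exp (a * expectation Y) \<le> enn2real I" using e by simp
    then have "a * expectation Y \<le> ln (enn2real I)"
      by (metis exp_gt_zero exp_le_cancel_iff exp_ln less_le_trans)
    then show ?thesis using False by (simp add: log_mgf_def I_def[symmetric])
  qed
qed

lemma exp_wavg: "exp (u * p + (1 - u) * q) \<le> u * exp p + (1 - u) * exp q"
  if "0 \<le> u" "u \<le> 1" for u p q :: real
proof -
  have "convex_on UNIV exp" using convex_on_exp[of 1] by simp
  then show ?thesis using that
    unfolding convex_on_def
    apply (elim conjE)
    apply (drule bspec[of _ _ p], simp)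
    apply (drule bspec[of _ _ q], simp)
    apply (drule spec[of _ u])
    apply (drule mp, simp)
    apply (drule spec[of _ "1-u"])
    by simp
qed

lemma log_mgf_convex:
  assumes "prob_space M" and meas: "Y \<in> borel_measurable M" and u: "0 < u" "u < 1"
  shows "log_mgf M Y (u * a + (1 - u) * b) \<le> ereal u * log_mgf M Y a + ereal (1 - u) * log_mgf M Y b"
proof -
  interpret prob_space M by fact
  define Ia where "Ia = (\<integral>\<^sup>+ \<omega>. ennreal (exp (a * Y \<omega>)) \<partial>M)"
  define Ib where "Ib = (\<integral>\<^sup>+ \<omega>. ennreal (exp (b * Y \<omega>)) \<partial>M)"
  define Ic where "Ic = (\<integral>\<^sup>+ \<omega>. ennreal (exp ((u * a + (1 - u) * b) * Y \<omega>)) \<partial>M)"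
  have pos: "(\<integral>\<^sup>+ \<omega>. ennreal (exp (c * Y \<omega>)) \<partial>M) \<noteq> 0" for c
  proof
    assume "(\<integral>\<^sup>+ \<omega>. ennreal (exp (c * Y \<omega>)) \<partial>M) = 0"
    then have "AE \<omega> in M. ennreal (exp (c * Y \<omega>)) = 0"
      by (subst (asm) nn_integral_0_iff_AE) (use meas in auto)
    then have "AE \<omega> in M. False" by simp
    then show False by simp
  qed
  show ?thesis
  proof (cases "Ia = \<infinity> \<or> Ib = \<infinity>")
    case True
    then show ?thesis
    proof
      assume "Ia = \<infinity>"
      then have "log_mgf M Y a = \<infinity>" by (simp add: log_mgf_def Ia_def[symmetric])
      moreover have "log_mgf M Y b \<noteq> -\<infinity>" by (rule log_mgf_not_minf)
      ultimately show ?thesis using u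
        by (cases "log_mgf M Y b") (auto simp: ereal_mult_less_0_iff)
    next
      assume "Ib = \<infinity>"
      then have "log_mgf M Y b = \<infinity>" by (simp add: log_mgf_def Ib_def[symmetric])
      moreover have "log_mgf M Y a \<noteq> -\<infinity>" by (rule log_mgf_not_minf)
      ultimately show ?thesis using u
        by (cases "log_mgf M Y a") (auto simp: ereal_mult_less_0_iff)
    qed
  next
    case False
    define A where "A = enn2real Ia"
    define B where "B = enn2real Ib"
    have IaA: "Ia = ennreal A" using False by (simp add: A_def ennreal_enn2real_if top.not_eq_extremum)
    have IbB: "Ib = ennreal B" using False by (simp add: B_def ennreal_enn2real_if top.not_eq_extremum)
    have Apos: "A > 0" using pos[of a] False unfolding A_def Ia_def
      by (simp add: enn2real_positive_iff top.not_eq_extremum zero_less_iff_neq_zero)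
    have Bpos: "B > 0" using pos[of b] False unfolding B_def Ib_def
      by (simp add: enn2real_positive_iff top.not_eq_extremum zero_less_iff_neq_zero)
    define K where "K = exp (u * ln A + (1 - u) * ln B)"
    have Kpos: "K > 0" by (simp add: K_def)
    have pw: "exp ((u * a + (1 - u) * b) * y) \<le> (K * u / A) * exp (a * y) + (K * (1 - u) / B) * exp (b * y)" for y
    proof -
      have "exp (u * (a * y - ln A) + (1 - u) * (b * y - ln B)) \<le> u * exp (a * y - ln A) + (1 - u) * exp (b * y - ln B)"
        using exp_wavg[of u] u by auto
      also have "\<dots> = u * exp (a * y) / A + (1 - u) * exp (b * y) / B"
        using Apos Bpos by (simp add: exp_diff)
      finally have *: "exp (u * (a * y - ln A) + (1 - u) * (b * y - ln B)) \<le> u * exp (a * y) / A + (1 - u) * exp (b * y) / B" .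
      have "exp ((u * a + (1 - u) * b) * y) = K * exp (u * (a * y - ln A) + (1 - u) * (b * y - ln B))"
        unfolding K_def by (simp add: exp_add[symmetric] algebra_simps)
      also have "\<dots> \<le> K * (u * exp (a * y) / A + (1 - u) * exp (b * y) / B)"
        using * Kpos by (simp add: mult_left_mono)
      finally show ?thesis by (simp add: algebra_simps)
    qed
    have "Ic \<le> (\<integral>\<^sup>+ \<omega>. ennreal (K * u / A) * ennreal (exp (a * Y \<omega>)) + ennreal (K * (1 - u) / B) * ennreal (exp (b * Y \<omega>)) \<partial>M)"
      unfolding Ic_def
    proof (rule nn_integral_mono)
      fix \<omega>
      have "ennreal (exp ((u * a + (1 - u) * b) * Y \<omega>)) \<le> ennreal ((K * u / A) * exp (a * Y \<omega>) + (K * (1 - u) / B) * exp (b * Y \<omega>))"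
        by (rule ennreal_leI) (rule pw)
      also have "\<dots> = ennreal (K * u / A) * ennreal (exp (a * Y \<omega>)) + ennreal (K * (1 - u) / B) * ennreal (exp (b * Y \<omega>))"
      proof -
        have m1: "ennreal (K * u / A) * ennreal (exp (a * Y \<omega>)) = ennreal ((K * u / A) * exp (a * Y \<omega>))"
          by (rule ennreal_mult[symmetric]) (use Kpos Apos u in auto)
        have m2: "ennreal (K * (1 - u) / B) * ennreal (exp (b * Y \<omega>)) = ennreal ((K * (1 - u) / B) * exp (b * Y \<omega>))"
          by (rule ennreal_mult[symmetric]) (use Kpos Bpos u in auto)
        show ?thesis unfolding m1 m2
          by (rule ennreal_plus) (use Kpos Apos Bpos u in auto)
      qed
      finally show "ennreal (exp ((u * a + (1 - u) * b) * Y \<omega>)) \<le> ennreal (K * u / A) * ennreal (exp (a * Y \<omega>)) + ennreal (K * (1 - u) / B) * ennreal (exp (b * Y \<omega>))" .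
    qed
    also have "\<dots> = ennreal (K * u / A) * Ia + ennreal (K * (1 - u) / B) * Ib"
      unfolding Ia_def Ib_def using meas
      by (subst nn_integral_add) (auto simp: nn_integral_cmult)
    also have "\<dots> = ennreal K"
    proof -
      have e: "K * u / A * A + K * (1 - u) / B * B = K" using Apos Bpos by (simp add: field_simps)
      have "ennreal (K * u / A) * ennreal A + ennreal (K * (1 - u) / B) * ennreal B
            = ennreal (K * u / A * A + K * (1 - u) / B * B)"
      proof -
        have m1: "ennreal (K * u / A) * ennreal A = ennreal (K * u / A * A)"
          by (rule ennreal_mult[symmetric]) (use Kpos Apos u in auto)
        have m2: "ennreal (K * (1 - u) / B) * ennreal B = ennreal (K * (1 - u) / B * B)"
          by (rule ennreal_mult[symmetric]) (use Kpos Bpos u in auto)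
        show ?thesis unfolding m1 m2
          by (rule ennreal_plus[symmetric]) (use Kpos Apos Bpos u in auto)
      qed
      then show ?thesis unfolding IaA IbB e .
    qed
    finally have IcK: "Ic \<le> ennreal K" .
    then have Icfin: "Ic \<noteq> \<infinity>" by (auto simp: top_unique)
    have Icpos: "enn2real Ic > 0" using pos[of "u * a + (1 - u) * b"] Icfin
      by (simp add: Ic_def enn2real_positive_iff top.not_eq_extremum zero_less_iff_neq_zero)
    have "enn2real Ic \<le> K" using IcK Kpos
      using enn2real_mono[OF IcK] by simp
    then have "ln (enn2real Ic) \<le> ln K" using Icpos by simp
    also have "ln K = u * ln A + (1 - u) * ln B" by (simp add: K_def)
    finally have "ln (enn2real Ic) \<le> u * ln A + (1 - u) * ln B" .
    then show ?thesis using False Icfin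
      by (simp add: log_mgf_def Ia_def[symmetric] Ib_def[symmetric] Ic_def[symmetric] A_def[symmetric] B_def[symmetric])
  qed
qed

lemma ereal_cmult_add:
  fixes A B :: ereal
  assumes "0 \<le> c" "A \<noteq> -\<infinity>" "B \<noteq> -\<infinity>"
  shows "ereal c * (A + B) = ereal c * A + ereal c * B"
  using assms by (cases A; cases B) (auto simp: distrib_left)

lemma Lam_props:
  fixes M :: "'a measure" and X :: "nat \<Rightarrow> nat \<Rightarrow> 'a \<Rightarrow> real" and L :: "real \<Rightarrow> ereal"
  assumes prob: "prob_space M"
    and meas: "\<And>t. X l t \<in> borel_measurable M"
    and ident: "\<forall>t. distr M borel (X l t) = distr M borel (X l 0)"
    and integ: "integrable M (X l 0)"
    and mean: "\<mu> = prob_space.expectation M (X l 0)"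
    and A1: "\<forall>lam. ((\<lambda>n. ereal (1 / real n) * Lambda_n M X l n (real n * lam)) \<longlongrightarrow> L lam) sequentially"
  shows "L 0 = 0" "\<And>lam. ereal (lam * \<mu>) \<le> L lam"
    "\<And>a b u. 0 < u \<Longrightarrow> u < 1 \<Longrightarrow> L (u * a + (1 - u) * b) \<le> ereal u * L a + ereal (1 - u) * L b"
proof -
  interpret prob_space M by fact
  have int_t: "integrable M (X l t)" for t
  proof -
    have "integrable (distr M borel (X l 0)) (\<lambda>x. x)"
      using integ meas by (subst integrable_distr_eq) auto
    then have "integrable (distr M borel (X l t)) (\<lambda>x. x)" by (simp only: ident[rule_format, of t])
    then show ?thesis using meas by (subst (asm) integrable_distr_eq) auto
  qed
  have exp_t: "expectation (X l t) = \<mu>" for t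
  proof -
    have "expectation (X l t) = integral\<^sup>L (distr M borel (X l t)) (\<lambda>x. x)"
      using meas by (subst integral_distr) auto
    also have "\<dots> = integral\<^sup>L (distr M borel (X l 0)) (\<lambda>x. x)" by (simp only: ident[rule_format, of t])
    also have "\<dots> = expectation (X l 0)"
      using meas by (subst integral_distr) auto
    finally show ?thesis using mean by simp
  qed
  have smeas: "sample_mean X l n \<in> borel_measurable M" for n
    unfolding sample_mean_def[abs_def] using meas by measurable
  have sint: "integrable M (sample_mean X l n)" for n
    unfolding sample_mean_def[abs_def] using int_t by auto
  have sexp: "expectation (sample_mean X l n) = \<mu>" if "n \<ge> 1" for n
  proof -
    have "expectation (sample_mean X l n) = (\<Sum>t<n. expectation (X l t)) / real n"
      unfolding sample_mean_def[abs_def] using int_t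
      by (simp add: Bochner_Integration.integral_sum)
    also have "\<dots> = \<mu>" using that exp_t by simp
    finally show ?thesis .
  qed
  define s where "s n lam = ereal (1 / real n) * Lambda_n M X l n (real n * lam)" for n lam
  have sL: "(\<lambda>n. s n lam) \<longlonglongrightarrow> L lam" for lam
    using A1 unfolding s_def by auto
  show "L 0 = 0"
  proof -
    have "(\<lambda>n. s n 0) = (\<lambda>n. 0)"
      by (auto simp: s_def Lambda_n_def log_mgf_zero[OF prob])
    then have "(\<lambda>n. s n 0) \<longlonglongrightarrow> 0" by simp
    then show ?thesis using sL[of 0] LIMSEQ_unique by blast
  qed
  show "ereal (lam * \<mu>) \<le> L lam" for lam
  proof (rule LIMSEQ_le_const[OF sL])
    show "\<exists>N. \<forall>n\<ge>N. ereal (lam * \<mu>) \<le> s n lam"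
    proof (intro exI allI impI)
      fix n :: nat assume n: "1 \<le> n"
      have "ereal (real n * lam * \<mu>) \<le> Lambda_n M X l n (real n * lam)"
        using log_mgf_lower[OF prob sint[of n], of "real n * lam"] sexp[OF n]
        by (simp add: Lambda_n_def)
      then have "ereal (1 / real n) * ereal (real n * lam * \<mu>) \<le> s n lam"
        unfolding s_def by (rule ereal_mult_left_mono) auto
      then show "ereal (lam * \<mu>) \<le> s n lam" using n by simp
    qed
  qed
  fix a b u :: real assume u: "0 < u" "u < 1"
  have sconv: "s n (u * a + (1 - u) * b) \<le> ereal u * s n a + ereal (1 - u) * s n b" for n
  proof -
    have "Lambda_n M X l n (real n * (u * a + (1 - u) * b))
          \<le> ereal u * Lambda_n M X l n (real n * a) + ereal (1 - u) * Lambda_n M X l n (real n * b)"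
      using log_mgf_convex[OF prob smeas u, where a="real n * a" and b="real n * b"]
      by (simp add: Lambda_n_def algebra_simps)
    then have "s n (u * a + (1 - u) * b) \<le> ereal (1 / real n) * (ereal u * Lambda_n M X l n (real n * a) + ereal (1 - u) * Lambda_n M X l n (real n * b))"
      unfolding s_def by (rule ereal_mult_left_mono) auto
    also have "\<dots> = ereal u * s n a + ereal (1 - u) * s n b"
      unfolding s_def using u
      by (subst ereal_cmult_add)
         (auto simp: Lambda_n_def log_mgf_not_minf ereal_mult_eq_MInfty mult.assoc mult.left_commute)
    finally show ?thesis .
  qed
  have nm: "L x \<noteq> -\<infinity>" for x
    using \<open>\<And>lam. ereal (lam * \<mu>) \<le> L lam\<close>[of x] by auto
  show "L (u * a + (1 - u) * b) \<le> ereal u * L a + ereal (1 - u) * L b"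
  proof (cases "L a = \<infinity> \<or> L b = \<infinity>")
    case True
    then have eq: "ereal u * L a + ereal (1 - u) * L b = \<infinity>"
      using u nm[of a] nm[of b]
      by (cases "L a"; cases "L b") (auto simp: ereal_mult_less_0_iff)
    show ?thesis unfolding eq by simp
  next
    case False
    then have fa: "\<bar>L a\<bar> \<noteq> \<infinity>" and fb: "\<bar>L b\<bar> \<noteq> \<infinity>" using nm[of a] nm[of b] by auto
    have "(\<lambda>n. ereal u * s n a + ereal (1 - u) * s n b) \<longlonglongrightarrow> ereal u * L a + ereal (1 - u) * L b"
      apply (rule tendsto_add_ereal)
      using fa fb by (auto intro!: tendsto_cmult_ereal sL)
    then show ?thesis
      by (rule LIMSEQ_le[OF sL]) (use sconv in auto)
  qed
qed

lemma fermat_open: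
  fixes \<phi> :: "real \<Rightarrow> real"
  assumes "open S" "t \<in> S" "DERIV \<phi> t :> c" "\<And>y. y \<in> S \<Longrightarrow> \<phi> y \<le> \<phi> t"
  shows "c = 0"
proof -
  obtain d where d: "d > 0" "ball t d \<subseteq> S" using assms(1,2) openE by blast
  show ?thesis
  proof (rule DERIV_local_max[OF assms(3) d(1)], intro allI impI)
    fix y assume "\<bar>t - y\<bar> < d"
    then have "y \<in> S" using d(2) by (auto simp: dist_real_def)
    then show "\<phi> y \<le> \<phi> t" by (rule assms(4))
  qed
qed

locale lmgf =
  fixes L :: "real \<Rightarrow> ereal" and \<mu> :: real
  assumes zero: "L 0 = 0" and lower: "\<And>lam. ereal (lam * \<mu>) \<le> L lam"
   and conv: "\<And>a b u. 0 < u \<Longrightarrow> u < 1 \<Longrightarrow> L (u * a + (1 - u) * b) \<le> ereal u * L a + ereal (1 - u) * L b"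
   and diff: "(\<lambda>lam. real_of_ereal (L lam)) differentiable_on interior (eff_dom L)"
begin

abbreviation "f \<equiv> (\<lambda>lam. real_of_ereal (L lam))"
abbreviation "D \<equiv> interior (eff_dom L)"
abbreviation "f' \<equiv> deriv f"

lemma nminf: "L x \<noteq> -\<infinity>"
  using lower[of x] by auto

lemma finD: "t \<in> D \<Longrightarrow> L t = ereal (f t)"
proof -
  assume "t \<in> D"
  then have "t \<in> eff_dom L" using interior_subset by blast
  then have "L t < \<infinity>" by (simp add: eff_dom_def)
  then show ?thesis using nminf[of t] by (cases "L t") auto
qed

lemma finE:
  assumes "t \<in> D"
  obtains r where "L t = ereal r" "f t = r"
  using finD[OF assms] by (cases "L t") auto

lemma derD: "t \<in> D \<Longrightarrow> DERIV f t :> f' t"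
  using diff differentiable_on_eq_differentiable_at[of D f]
  by (simp add: DERIV_deriv_iff_real_differentiable)

lemma tangent:
  assumes t: "t \<in> D"
  shows "ereal (f t + f' t * (lam - t)) \<le> L lam"
proof (cases "L lam")
  case PInf then show ?thesis by simp
next
  case MInf then show ?thesis using nminf by simp
next
  case (real v)
  show ?thesis
  proof (cases "lam = t")
    case True
    obtain r where "L t = ereal r" "f t = r" using finE[OF t] .
    then show ?thesis using True by simp
  next
    case False
    define d where "d = lam - t"
    have dnz: "d \<noteq> 0" using False by (simp add: d_def)
    define g where "g u = f (t + u * d)" for u
    have "DERIV g 0 :> f' t * d"
    proof -
      have "DERIV (\<lambda>u. t + u * d) 0 :> d" by (auto intro!: derivative_eq_intros)
      moreover have "DERIV f (t + 0 * d) :> f' t" using derD[OF t] by simp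
      ultimately show ?thesis unfolding g_def
        using DERIV_chain2[of f "f' t" "\<lambda>u. t + u * d" 0 d] by (simp add: mult.commute)
    qed
    then have lim0: "((\<lambda>h. (g (0 + h) - g 0) / h) \<longlongrightarrow> f' t * d) (at 0)"
      by (simp add: DERIV_def)
    have lim: "((\<lambda>h. (g h - g 0) / h) \<longlongrightarrow> f' t * d) (at_right 0)"
      using tendsto_mono[OF at_le[OF subset_UNIV] lim0] by simp
    obtain r where r: "r > 0" "ball t r \<subseteq> D" using t openE[of D t] by auto
    have ev: "eventually (\<lambda>h. (g h - g 0) / h \<le> v - f t) (at_right 0)"
      unfolding eventually_at_right_field
    proof (intro exI[of _ "min 1 (r / \<bar>d\<bar>)"] conjI allI impI)
      show "0 < min 1 (r / \<bar>d\<bar>)" using r dnz by simp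
      fix h :: real assume h: "0 < h" "h < min 1 (r / \<bar>d\<bar>)"
      have "h < r / \<bar>d\<bar>" using h(2) by simp
      then have "h * \<bar>d\<bar> < r" using dnz by (simp add: less_divide_eq)
      then have "\<bar>h * d\<bar> < r" using h(1) by (simp add: abs_mult)
      then have inD: "t + h * d \<in> D" using r(2) by (auto simp: dist_real_def)
      have "L (h * lam + (1 - h) * t) \<le> ereal h * L lam + ereal (1 - h) * L t"
        using conv[of h lam t] h by simp
      also have "h * lam + (1 - h) * t = t + h * d" by (simp add: d_def algebra_simps)
      finally have "L (t + h * d) \<le> ereal h * L lam + ereal (1 - h) * L t" .
      moreover obtain r1 where "L (t + h * d) = ereal r1" "f (t + h * d) = r1" using finE[OF inD] .
      moreover obtain r2 where "L t = ereal r2" "f t = r2" using finE[OF t] .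
      ultimately have "ereal (f (t + h * d)) \<le> ereal (h * v + (1 - h) * f t)"
        using real by simp
      then have "g h \<le> h * v + (1 - h) * f t" by (simp add: g_def)
      then have "g h - g 0 \<le> h * (v - f t)" by (simp add: g_def algebra_simps)
      then have "(g h - g 0) / h \<le> h * (v - f t) / h" by (rule divide_right_mono) (use h(1) in auto)
      then show "(g h - g 0) / h \<le> v - f t" using h(1) by simp
    qed
    have "f' t * d \<le> v - f t"
      by (rule tendsto_upperbound[OF lim ev]) simp
    then show ?thesis using real by (simp add: d_def)
  qed
qed

lemma leg_nonneg: "legendre L x \<ge> 0"
proof -
  have "ereal (0 * x) - L 0 \<le> legendre L x" unfolding legendre_def by (rule SUP_upper) simp
  then show ?thesis using zero by (simp add: zero_ereal_def)
qed

lemma leg_mu: "legendre L \<mu> = 0"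
proof (rule antisym)
  show "legendre L \<mu> \<le> 0" unfolding legendre_def
  proof (rule SUP_least)
    fix lam
    show "ereal (lam * \<mu>) - L lam \<le> 0"
      using lower[of lam] by (cases "L lam") auto
  qed
qed (rule leg_nonneg)

lemma leg_conv:
  assumes u: "0 < u" "u < 1"
  shows "legendre L (u * x + (1 - u) * y) \<le> ereal u * legendre L x + ereal (1 - u) * legendre L y"
  unfolding legendre_def[of L "u * x + (1 - u) * y"]
proof (rule SUP_least)
  fix lam
  show "ereal (lam * (u * x + (1 - u) * y)) - L lam \<le> ereal u * legendre L x + ereal (1 - u) * legendre L y"
  proof (cases "L lam")
    case (real v)
    have ux: "ereal (lam * x - v) \<le> legendre L x"
      unfolding legendre_def using SUP_upper[of lam UNIV "\<lambda>lam. ereal (lam * x) - L lam"] real by simp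
    have uy: "ereal (lam * y - v) \<le> legendre L y"
      unfolding legendre_def using SUP_upper[of lam UNIV "\<lambda>lam. ereal (lam * y) - L lam"] real by simp
    have "ereal (lam * (u * x + (1 - u) * y)) - L lam = ereal u * ereal (lam * x - v) + ereal (1 - u) * ereal (lam * y - v)"
    proof -
      have "lam * (u * x + (1 - u) * y) - v = u * (lam * x - v) + (1 - u) * (lam * y - v)"
        by (simp add: algebra_simps)
      then show ?thesis using real by simp
    qed
    also have "\<dots> \<le> ereal u * legendre L x + ereal (1 - u) * legendre L y"
      apply (rule add_mono)
      apply (rule ereal_mult_left_mono[OF ux]) using u apply simp
      apply (rule ereal_mult_left_mono[OF uy]) using u apply simp
      done
    finally show ?thesis .
  qed (use nminf in auto)
qed

lemma leg_F:
  assumes t: "t \<in> D"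
  shows "legendre L (f' t) = ereal (t * f' t - f t)"
proof (rule antisym)
  show "legendre L (f' t) \<le> ereal (t * f' t - f t)" unfolding legendre_def
  proof (rule SUP_least)
    fix lam
    show "ereal (lam * f' t) - L lam \<le> ereal (t * f' t - f t)"
    proof (cases "L lam")
      case (real v)
      have "f t + f' t * (lam - t) \<le> v" using tangent[OF t, of lam] real by simp
      then have "lam * f' t - v \<le> t * f' t - f t" by (simp add: algebra_simps)
      then show ?thesis using real by simp
    qed (use nminf in auto)
  qed
  show "ereal (t * f' t - f t) \<le> legendre L (f' t)"
  proof -
    obtain r where "L t = ereal r" "f t = r" using finE[OF t] .
    then show ?thesis unfolding legendre_def
      using SUP_upper[of t UNIV "\<lambda>lam. ereal (lam * f' t) - L lam"] by simp
  qed
qed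

lemma leg_strict:
  assumes t1: "t1 \<in> D" and t2: "t2 \<in> D" and t: "t \<in> D" and ne: "f' t1 \<noteq> f' t2"
    and u: "0 < u" "u < 1" and x: "f' t = u * f' t1 + (1 - u) * f' t2"
  shows "t * f' t - f t < u * (t1 * f' t1 - f t1) + (1 - u) * (t2 * f' t2 - f t2)"
proof (rule ccontr)
  assume nlt: "\<not> ?thesis"
  have tg: "t * f' s - f t \<le> s * f' s - f s" if s: "s \<in> D" for s
  proof -
    obtain r where "L t = ereal r" "f t = r" using finE[OF t] .
    then show ?thesis using tangent[OF s, of t] by (simp add: algebra_simps)
  qed
  have split: "t * f' t - f t = u * (t * f' t1 - f t) + (1 - u) * (t * f' t2 - f t)"
    by (subst x) (simp add: algebra_simps)
  have a1: "u * (t1 * f' t1 - f t1 - (t * f' t1 - f t)) \<ge> 0" using tg[OF t1] u by simp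
  have a2: "(1 - u) * (t2 * f' t2 - f t2 - (t * f' t2 - f t)) \<ge> 0" using tg[OF t2] u by simp
  have sum0: "u * (t1 * f' t1 - f t1 - (t * f' t1 - f t)) + (1 - u) * (t2 * f' t2 - f t2 - (t * f' t2 - f t)) \<le> 0"
    using nlt split by (simp add: algebra_simps)
  have e1: "t * f' t1 - f t = t1 * f' t1 - f t1"
  proof -
    have "u * (t1 * f' t1 - f t1 - (t * f' t1 - f t)) = 0" using a1 a2 sum0 by linarith
    then show ?thesis using u by simp
  qed
  have e2: "t * f' t2 - f t = t2 * f' t2 - f t2"
  proof -
    have "(1 - u) * (t2 * f' t2 - f t2 - (t * f' t2 - f t)) = 0" using a1 a2 sum0 by linarith
    then show ?thesis using u by simp
  qed
  have z: "f' s - f' t = 0" if s: "s \<in> D" and es: "t * f' s - f t = s * f' s - f s" for s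
  proof (rule fermat_open[where \<phi>="\<lambda>lam. lam * f' s - f lam" and S=D and t=t])
    show "open D" by simp
    show "t \<in> D" by fact
    show "DERIV (\<lambda>lam. lam * f' s - f lam) t :> f' s - f' t"
      using derD[OF t] by (auto intro!: derivative_eq_intros)
    fix y assume y: "y \<in> D"
    have "y * f' s - f y \<le> s * f' s - f s"
    proof -
      obtain r where "L y = ereal r" "f y = r" using finE[OF y] .
      then show ?thesis using tangent[OF s, of y] by (simp add: algebra_simps)
    qed
    then show "y * f' s - f y \<le> t * f' s - f t" using es by simp
  qed
  have "f' t1 = f' t" using z[OF t1 e1] by simp
  moreover have "f' t2 = f' t" using z[OF t2 e2] by simp
  ultimately show False using ne by simp
qed

end

context lmgf begin

abbreviation "psi \<equiv> (\<lambda>x. real_of_ereal (legendre L x))"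

lemma legE:
  assumes "legendre L x < \<infinity>"
  obtains r where "legendre L x = ereal r" "psi x = r"
  using assms leg_nonneg[of x] by (cases "legendre L x") auto

lemma leg_conv_real:
  assumes fx: "legendre L x < \<infinity>" and fy: "legendre L y < \<infinity>" and u: "0 < u" "u < 1"
  shows "legendre L (u * x + (1 - u) * y) < \<infinity>"
    "psi (u * x + (1 - u) * y) \<le> u * psi x + (1 - u) * psi y"
proof -
  obtain rx where rx: "legendre L x = ereal rx" "psi x = rx" using legE[OF fx] .
  obtain ry where ry: "legendre L y = ereal ry" "psi y = ry" using legE[OF fy] .
  have c: "legendre L (u * x + (1 - u) * y) \<le> ereal (u * rx + (1 - u) * ry)"
    using leg_conv[OF u, of x y] rx ry by simp
  then show f: "legendre L (u * x + (1 - u) * y) < \<infinity>" by (auto simp: le_less_trans)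
  obtain rz where rz: "legendre L (u * x + (1 - u) * y) = ereal rz" "psi (u * x + (1 - u) * y) = rz"
    using legE[OF f] .
  show "psi (u * x + (1 - u) * y) \<le> u * psi x + (1 - u) * psi y"
    using c rx ry rz by simp
qed

lemma leg_between:
  assumes fp: "legendre L p < \<infinity>" and fq: "legendre L q < \<infinity>" and z: "p \<le> z" "z \<le> q"
  shows "legendre L z < \<infinity>"
proof (cases "z = p \<or> z = q")
  case True then show ?thesis using fp fq by auto
next
  case False
  then have pz: "p < z" "z < q" using z by auto
  define u where "u = (q - z) / (q - p)"
  have u: "0 < u" "u < 1" using pz by (auto simp: u_def field_simps)
  have eq: "u * (q - p) = q - z" using pz by (simp add: u_def)
  have "u * p + (1 - u) * q = q - u * (q - p)" by (simp add: algebra_simps)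
  also have "\<dots> = z" using eq by simp
  finally have "u * p + (1 - u) * q = z" .
  then show ?thesis using leg_conv_real(1)[OF fp fq u] by simp
qed

lemma leg_fin_F: "x \<in> f' ` D \<Longrightarrow> legendre L x < \<infinity>"
  using leg_F by auto

lemma leg_strict_F:
  assumes "x1 \<in> f' ` D" "x2 \<in> f' ` D" "z \<in> f' ` D" "x1 \<noteq> x2" "0 < u" "u < 1" "z = u * x1 + (1 - u) * x2"
  shows "psi z < u * psi x1 + (1 - u) * psi x2"
proof -
  obtain t1 where t1: "t1 \<in> D" "x1 = f' t1" using assms(1) by auto
  obtain t2 where t2: "t2 \<in> D" "x2 = f' t2" using assms(2) by auto
  obtain t where t: "t \<in> D" "z = f' t" using assms(3) by auto
  have "t * f' t - f t < u * (t1 * f' t1 - f t1) + (1 - u) * (t2 * f' t2 - f t2)"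
    using leg_strict[OF t1(1) t2(1) t(1)] assms t1 t2 t by simp
  then show ?thesis using leg_F[OF t1(1)] leg_F[OF t2(1)] leg_F[OF t(1)] t1 t2 t by simp
qed

lemma leg_mono1:
  assumes "\<mu> \<le> x" "x \<le> y"
  shows "legendre L x \<le> legendre L y"
proof (cases "x = \<mu> \<or> x = y")
  case True then show ?thesis using leg_mu leg_nonneg[of y] by auto
next
  case False
  then have xy: "\<mu> < x" "x < y" using assms by auto
  define th where "th = (y - x) / (y - \<mu>)"
  have th: "0 < th" "th < 1" using xy by (auto simp: th_def field_simps)
  have eq: "th * (y - \<mu>) = y - x" using xy by (simp add: th_def)
  have "th * \<mu> + (1 - th) * y = y - th * (y - \<mu>)" by (simp add: algebra_simps)
  also have "\<dots> = x" using eq by simp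
  finally have e: "th * \<mu> + (1 - th) * y = x" .
  have "legendre L x \<le> ereal th * legendre L \<mu> + ereal (1 - th) * legendre L y"
    using leg_conv[OF th, of \<mu> y] e by simp
  also have "\<dots> = ereal (1 - th) * legendre L y" using leg_mu by simp
  also have "\<dots> \<le> legendre L y"
    using th leg_nonneg[of y] by (cases "legendre L y") (auto simp: mult_left_le_one_le)
  finally show ?thesis .
qed

lemma leg_mono2:
  assumes "y \<le> x" "x \<le> \<mu>"
  shows "legendre L x \<le> legendre L y"
proof (cases "x = \<mu> \<or> x = y")
  case True then show ?thesis using leg_mu leg_nonneg[of y] by auto
next
  case False
  then have xy: "y < x" "x < \<mu>" using assms by auto
  define th where "th = (x - y) / (\<mu> - y)"
  have th: "0 < th" "th < 1" using xy by (auto simp: th_def field_simps)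
  have eq: "th * (\<mu> - y) = x - y" using xy by (simp add: th_def)
  have "th * \<mu> + (1 - th) * y = y + th * (\<mu> - y)" by (simp add: algebra_simps)
  also have "\<dots> = x" using eq by simp
  finally have e: "th * \<mu> + (1 - th) * y = x" .
  have "legendre L x \<le> ereal th * legendre L \<mu> + ereal (1 - th) * legendre L y"
    using leg_conv[OF th, of \<mu> y] e by simp
  also have "\<dots> = ereal (1 - th) * legendre L y" using leg_mu by simp
  also have "\<dots> \<le> legendre L y"
    using th leg_nonneg[of y] by (cases "legendre L y") (auto simp: mult_left_le_one_le)
  finally show ?thesis .
qed

end

theorem lemma2:
  fixes M :: "'a measure"
    and X :: "nat \<Rightarrow> nat \<Rightarrow> 'a \<Rightarrow> real"
    and Lam :: "nat \<Rightarrow> real \<Rightarrow> ereal"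
    and \<mu> :: "nat \<Rightarrow> real"
    and \<sigma> :: "nat \<Rightarrow> nat"
    and k m i j :: nat
    and ri rj :: real
  assumes prob: "prob_space M"
    and indep: "prob_space.indep_vars M (\<lambda>_. borel) (\<lambda>(l, t). X l t) ({1..k} \<times> UNIV)"
    and ident: "\<forall>l\<in>{1..k}. \<forall>t. distr M borel (X l t) = distr M borel (X l 0)"
    and integ: "\<forall>l\<in>{1..k}. integrable M (X l 0)"
    and mean: "\<forall>l\<in>{1..k}. \<mu> l = prob_space.expectation M (X l 0)"
    and k2: "k \<ge> 2" and m: "1 \<le> m" "m < k"
    and sigma: "bij_betw \<sigma> {1..k} {1..k}"
    and order: "\<forall>a\<in>{1..k}. \<forall>b\<in>{1..k}. a < b \<longrightarrow> \<mu> (\<sigma> a) > \<mu> (\<sigma> b)"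
    and A1: "\<forall>l\<in>{1..k}. \<forall>lam. ((\<lambda>n. ereal (1 / real n) * Lambda_n M X l n (real n * lam))
                \<longlongrightarrow> Lam l lam) sequentially"
    and A2: "\<forall>l\<in>{1..k}. 0 \<in> interior (eff_dom (Lam l))"
    and A3_diff: "\<forall>l\<in>{1..k}. (\<lambda>lam. real_of_ereal (Lam l lam)) differentiable_on interior (eff_dom (Lam l))"
    and A3_conv: "\<forall>l\<in>{1..k}. strictly_convex_on (interior (eff_dom (Lam l))) (\<lambda>lam. real_of_ereal (Lam l lam))"
    and A3_cont: "\<forall>l\<in>{1..k}. continuous_on (interior (eff_dom (Lam l))) (\<lambda>lam. real_of_ereal (Lam l lam))"
    and A3_steep: "\<forall>l\<in>{1..k}. steep (\<lambda>lam. real_of_ereal (Lam l lam)) (interior (eff_dom (Lam l)))"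
    and A4: "{\<mu> (\<sigma> k)..\<mu> (\<sigma> 1)} \<subseteq>
               (\<Inter>l\<in>{1..k}. interior ((\<lambda>lam. deriv (\<lambda>lam'. real_of_ereal (Lam l lam')) lam)
                                   ` interior (eff_dom (Lam l))))"
    and i: "i \<in> {1..m}" and j: "j \<in> {m+1..k}"
    and r: "ri > 0" "rj > 0"
  shows "\<exists>!x::real. \<forall>y. ereal ri * legendre (Lam (\<sigma> i)) x + ereal rj * legendre (Lam (\<sigma> j)) x
                        \<le> ereal ri * legendre (Lam (\<sigma> i)) y + ereal rj * legendre (Lam (\<sigma> j)) y"
proof -
  interpret P: prob_space M by (rule prob)
  have meas: "X l t \<in> borel_measurable M" if l: "l \<in> {1..k}" for l t
  proof -
    have "\<forall>x\<in>{1..k} \<times> UNIV. (\<lambda>(l, t). X l t) x \<in> measurable M borel"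
      using indep unfolding P.indep_vars_def2 by blast
    then show ?thesis using l by auto
  qed
  have lm: "lmgf (Lam l) (\<mu> l)" if l: "l \<in> {1..k}" for l
  proof -
    note props = Lam_props[OF prob meas[OF l] bspec[OF ident l] bspec[OF integ l] bspec[OF mean l] bspec[OF A1 l]]
    show ?thesis
      by (rule lmgf.intro) (use props bspec[OF A3_diff l] in auto)
  qed
  have i1: "1 \<le> i" "i \<le> m" using i by auto
  have j1: "m + 1 \<le> j" "j \<le> k" using j by auto
  have ik: "i \<in> {1..k}" "j \<in> {1..k}" "1 \<in> {1..k}" "k \<in> {1..k}" using i1 j1 m k2 by auto
  define li where "li = \<sigma> i"
  define lj where "lj = \<sigma> j"
  have lik: "li \<in> {1..k}" "lj \<in> {1..k}"
    using bij_betw_apply[OF sigma ik(1)] bij_betw_apply[OF sigma ik(2)] by (auto simp: li_def lj_def)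
  define a where "a = \<mu> li"
  define b where "b = \<mu> lj"
  have ba: "b < a" using order ik(1,2) i1 j1 by (auto simp: a_def b_def li_def lj_def)
  have a_le: "a \<le> \<mu> (\<sigma> 1)"
  proof (cases "i = 1")
    case True then show ?thesis by (simp add: a_def li_def)
  next
    case False then have "1 < i" using i1 by simp
    then show ?thesis using order ik(1,3) by (auto simp: a_def li_def intro: less_imp_le)
  qed
  have b_ge: "\<mu> (\<sigma> k) \<le> b"
  proof (cases "j = k")
    case True then show ?thesis by (simp add: b_def lj_def)
  next
    case False then have "j < k" using j1 by simp
    then show ?thesis using order ik(2,4) by (auto simp: b_def lj_def intro: less_imp_le)
  qed
  interpret Li: lmgf "Lam li" a using lm[OF lik(1)] by (simp add: a_def)
  interpret Lj: lmgf "Lam lj" b using lm[OF lik(2)] by (simp add: b_def)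
  define W where "W = interior (Li.f' ` Li.D) \<inter> interior (Lj.f' ` Lj.D)"
  have openW: "open W" unfolding W_def by (intro open_Int open_interior)
  have subW: "{b..a} \<subseteq> W"
  proof
    fix x assume x: "x \<in> {b..a}"
    then have "x \<in> {\<mu> (\<sigma> k)..\<mu> (\<sigma> 1)}" using a_le b_ge by auto
    then have "x \<in> (\<Inter>l\<in>{1..k}. interior ((\<lambda>lam. deriv (\<lambda>lam'. real_of_ereal (Lam l lam')) lam)
                                   ` interior (eff_dom (Lam l))))" using A4 by blast
    then show "x \<in> W" using lik unfolding W_def by auto
  qed
  have WF: "x \<in> Li.f' ` Li.D" "x \<in> Lj.f' ` Lj.D" if xW: "x \<in> W" for x
  proof -
    have "x \<in> interior (Li.f' ` Li.D)" "x \<in> interior (Lj.f' ` Lj.D)" using xW by (simp_all add: W_def)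
    then show "x \<in> Li.f' ` Li.D" "x \<in> Lj.f' ` Lj.D" using interior_subset by blast+
  qed
  have Wfin: "legendre (Lam li) x < \<infinity>" "legendre (Lam lj) x < \<infinity>" if xW: "x \<in> W" for x
    using Li.leg_fin_F[OF WF(1)[OF xW]] Lj.leg_fin_F[OF WF(2)[OF xW]] by auto
  define h where "h x = ereal ri * legendre (Lam li) x + ereal rj * legendre (Lam lj) x" for x
  define H where "H x = ri * Li.psi x + rj * Lj.psi x" for x
  have hH: "h x = ereal (H x)" if f1: "legendre (Lam li) x < \<infinity>" and f2: "legendre (Lam lj) x < \<infinity>" for x
  proof -
    obtain r1 where "legendre (Lam li) x = ereal r1" "Li.psi x = r1" using Li.legE[OF f1] .
    moreover obtain r2 where "legendre (Lam lj) x = ereal r2" "Lj.psi x = r2" using Lj.legE[OF f2] .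
    ultimately show ?thesis by (simp add: h_def H_def)
  qed
  have bW: "b \<in> W" "a \<in> W" using subW ba by auto
  obtain e1 where e1: "e1 > 0" "ball b e1 \<subseteq> W" using openE[OF openW bW(1)] by blast
  obtain e2 where e2: "e2 > 0" "ball a e2 \<subseteq> W" using openE[OF openW bW(2)] by blast
  define p where "p = b - min e1 e2 / 2"
  define q where "q = a + min e1 e2 / 2"
  have "p \<in> ball b e1" using e1 e2 by (simp add: p_def dist_real_def)
  then have pW: "p \<in> W" using e1(2) by blast
  have "q \<in> ball a e2" using e1 e2 by (simp add: q_def dist_real_def)
  then have qW: "q \<in> W" using e2(2) by blast
  have pb: "p < b" and aq: "a < q" using e1 e2 by (auto simp: p_def q_def)
  define S where "S = {p<..<q}"
  have Sfin: "legendre (Lam li) x < \<infinity>" "legendre (Lam lj) x < \<infinity>" if "x \<in> S" for x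
    using that Li.leg_between[OF Wfin(1)[OF pW] Wfin(1)[OF qW]] Lj.leg_between[OF Wfin(2)[OF pW] Wfin(2)[OF qW]]
    by (auto simp: S_def)
  have cvi: "convex_on S Li.psi"
  proof (rule convex_onI)
    fix t x y :: real assume t: "0 < t" "t < 1" and x: "x \<in> S" and y: "y \<in> S"
    have "Li.psi ((1 - t) * x + (1 - (1 - t)) * y) \<le> (1 - t) * Li.psi x + (1 - (1 - t)) * Li.psi y"
      by (rule Li.leg_conv_real(2)[OF Sfin(1)[OF x] Sfin(1)[OF y]]) (use t in auto)
    then show "Li.psi ((1 - t) *\<^sub>R x + t *\<^sub>R y) \<le> (1 - t) * Li.psi x + t * Li.psi y" by simp
  qed (simp add: S_def)
  have cvj: "convex_on S Lj.psi"
  proof (rule convex_onI)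
    fix t x y :: real assume t: "0 < t" "t < 1" and x: "x \<in> S" and y: "y \<in> S"
    have "Lj.psi ((1 - t) * x + (1 - (1 - t)) * y) \<le> (1 - t) * Lj.psi x + (1 - (1 - t)) * Lj.psi y"
      by (rule Lj.leg_conv_real(2)[OF Sfin(2)[OF x] Sfin(2)[OF y]]) (use t in auto)
    then show "Lj.psi ((1 - t) *\<^sub>R x + t *\<^sub>R y) \<le> (1 - t) * Lj.psi x + t * Lj.psi y" by simp
  qed (simp add: S_def)
  have baS: "{b..a} \<subseteq> S" using pb aq by (auto simp: S_def)
  have contH: "continuous_on {b..a} H"
  proof -
    have "continuous_on S Li.psi" "continuous_on S Lj.psi"
      using convex_on_continuous[OF _ cvi] convex_on_continuous[OF _ cvj] by (auto simp: S_def)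
    then have "continuous_on S H" unfolding H_def
      by (intro continuous_intros) auto
    then show ?thesis using baS continuous_on_subset by blast
  qed
  obtain x0 where x0: "x0 \<in> {b..a}" "\<And>y. y \<in> {b..a} \<Longrightarrow> H x0 \<le> H y"
    using continuous_attains_inf[OF compact_Icc _ contH] ba by auto
  have x0W: "x0 \<in> W" using subW x0(1) by blast
  have hx0: "h x0 = ereal (H x0)" by (rule hH[OF Wfin(1)[OF x0W] Wfin(2)[OF x0W]])
  have hba: "h x0 \<le> h y" if yba: "y \<in> {b..a}" for y
  proof -
    have yW: "y \<in> W" using subW yba by blast
    have "h y = ereal (H y)" by (rule hH[OF Wfin(1)[OF yW] Wfin(2)[OF yW]])
    then show ?thesis using hx0 x0(2)[OF yba] by simp
  qed
  have glob: "h x0 \<le> h y" for y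
  proof -
    consider "y \<in> {b..a}" | "a < y" | "y < b" by force
    then show ?thesis
    proof cases
      case 1 then show ?thesis by (rule hba)
    next
      case 2
      have m1: "legendre (Lam li) a \<le> legendre (Lam li) y" by (rule Li.leg_mono1) (use 2 in auto)
      have m2: "legendre (Lam lj) a \<le> legendre (Lam lj) y" by (rule Lj.leg_mono1) (use 2 ba in auto)
      have "h a \<le> h y" unfolding h_def
        by (intro add_mono ereal_mult_left_mono m1 m2) (use r in auto)
      moreover have "h x0 \<le> h a" by (rule hba) (use ba in auto)
      ultimately show ?thesis by simp
    next
      case 3
      have m1: "legendre (Lam li) b \<le> legendre (Lam li) y" by (rule Li.leg_mono2) (use 3 ba in auto)
      have m2: "legendre (Lam lj) b \<le> legendre (Lam lj) y" by (rule Lj.leg_mono2) (use 3 in auto)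
      have "h b \<le> h y" unfolding h_def
        by (intro add_mono ereal_mult_left_mono m1 m2) (use r in auto)
      moreover have "h x0 \<le> h b" by (rule hba) (use ba in auto)
      ultimately show ?thesis by simp
    qed
  qed
  have fx0: "legendre (Lam li) x0 < \<infinity>" "legendre (Lam lj) x0 < \<infinity>"
    using Wfin[OF subsetD[OF subW x0(1)]] by auto
  show ?thesis
  proof (rule ex1I[of _ x0])
    show "\<forall>y. ereal ri * legendre (Lam (\<sigma> i)) x0 + ereal rj * legendre (Lam (\<sigma> j)) x0
                        \<le> ereal ri * legendre (Lam (\<sigma> i)) y + ereal rj * legendre (Lam (\<sigma> j)) y"
      using glob unfolding h_def li_def lj_def by blast
  next
    fix y assume "\<forall>z. ereal ri * legendre (Lam (\<sigma> i)) y + ereal rj * legendre (Lam (\<sigma> j)) y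
                        \<le> ereal ri * legendre (Lam (\<sigma> i)) z + ereal rj * legendre (Lam (\<sigma> j)) z"
    then have yz: "h y \<le> h z" for z unfolding h_def li_def lj_def by blast
    show "y = x0"
    proof (rule ccontr)
      assume ne: "y \<noteq> x0"
      have hy: "h y = ereal (H x0)" using yz[of x0] glob[of y] hx0 by simp
      have fy1: "legendre (Lam li) y < \<infinity>"
      proof (rule ccontr)
        assume "\<not> legendre (Lam li) y < \<infinity>"
        then have "legendre (Lam li) y = \<infinity>" by (cases "legendre (Lam li) y") auto
        then have "h y = \<infinity>" unfolding h_def using r Lj.leg_nonneg[of y]
          by (cases "legendre (Lam lj) y") auto
        with hy show False by simp
      qed
      have fy2: "legendre (Lam lj) y < \<infinity>"
      proof (rule ccontr)
        assume "\<not> legendre (Lam lj) y < \<infinity>"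
        then have "legendre (Lam lj) y = \<infinity>" by (cases "legendre (Lam lj) y") auto
        then have "h y = \<infinity>" unfolding h_def using r Li.leg_nonneg[of y]
          by (cases "legendre (Lam li) y") auto
        with hy show False by simp
      qed
      have Hy: "H y = H x0" using hH[OF fy1 fy2] hy by simp
      define z where "z s = s * y + (1 - s) * x0" for s
      have zeq: "H (z s) = H x0" if s: "0 < s" "s < 1" for s
      proof -
        have c1: "legendre (Lam li) (z s) < \<infinity>" "Li.psi (z s) \<le> s * Li.psi y + (1 - s) * Li.psi x0"
          using Li.leg_conv_real[OF fy1 fx0(1) s] unfolding z_def by auto
        have c2: "legendre (Lam lj) (z s) < \<infinity>" "Lj.psi (z s) \<le> s * Lj.psi y + (1 - s) * Lj.psi x0"
          using Lj.leg_conv_real[OF fy2 fx0(2) s] unfolding z_def by auto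
        have m1: "ri * Li.psi (z s) \<le> ri * (s * Li.psi y + (1 - s) * Li.psi x0)"
          by (rule mult_left_mono[OF c1(2)]) (use r in simp)
        have m2: "rj * Lj.psi (z s) \<le> rj * (s * Lj.psi y + (1 - s) * Lj.psi x0)"
          by (rule mult_left_mono[OF c2(2)]) (use r in simp)
        have e: "s * H y + (1 - s) * H x0 = ri * (s * Li.psi y + (1 - s) * Li.psi x0) + rj * (s * Lj.psi y + (1 - s) * Lj.psi x0)"
          unfolding H_def by (simp add: algebra_simps)
        have e2: "H (z s) = ri * Li.psi (z s) + rj * Lj.psi (z s)" by (simp add: H_def)
        have "H (z s) \<le> s * H y + (1 - s) * H x0" using m1 m2 e e2 by linarith
        also have "\<dots> = H x0" using Hy by (simp add: algebra_simps)
        finally have le: "H (z s) \<le> H x0" .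
        have "h x0 \<le> h (z s)" by (rule glob)
        then have "H x0 \<le> H (z s)" using hx0 hH[OF c1(1) c2(1)] by simp
        with le show ?thesis by simp
      qed
      obtain rr where rr: "rr > 0" "ball x0 rr \<subseteq> W"
        using openE[OF openW subsetD[OF subW x0(1)]] by blast
      define d where "d = \<bar>y - x0\<bar>"
      have d: "d > 0" using ne by (simp add: d_def)
      define s1 where "s1 = min (1/2) (rr / (2 * d))"
      have s1: "0 < s1" "s1 \<le> 1/2" using rr d by (auto simp: s1_def)
      have "s1 \<le> rr / (2 * d)" by (simp add: s1_def)
      then have "s1 * d \<le> rr / (2 * d) * d" by (rule mult_right_mono) (use d in auto)
      then have s1d: "s1 * d \<le> rr / 2" using d by simp
      have zin: "z s \<in> W" if sp: "0 < s" "s \<le> s1" for s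
      proof -
        have "z s - x0 = s * (y - x0)" by (simp add: z_def algebra_simps)
        then have "\<bar>z s - x0\<bar> = s * d" using sp by (simp add: d_def abs_mult)
        also have "\<dots> \<le> s1 * d" using sp d by (simp add: mult_right_mono)
        finally have "\<bar>z s - x0\<bar> < rr" using s1d rr by linarith
        then have "z s \<in> ball x0 rr" by (simp add: dist_real_def abs_minus_commute)
        then show ?thesis using rr by blast
      qed
      define s2 where "s2 = s1 / 2"
      define sm where "sm = 3 * s1 / 4"
      have s2: "0 < s2" "s2 \<le> s1" "s2 < 1" using s1 by (auto simp: s2_def)
      have sm: "0 < sm" "sm \<le> s1" "sm < 1" using s1 by (auto simp: sm_def)
      have s1': "s1 < 1" using s1 by simp
      have zm: "z sm = 1/2 * z s1 + (1 - 1/2) * z s2"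
        unfolding z_def sm_def s2_def by (simp add: field_simps)
      have "z s1 - z s2 = (s1 / 2) * (y - x0)" unfolding z_def s2_def by (simp add: algebra_simps)
      then have zne: "z s1 \<noteq> z s2" using s1 ne by auto
      have st1: "Li.psi (z sm) < 1/2 * Li.psi (z s1) + (1 - 1/2) * Li.psi (z s2)"
        by (rule Li.leg_strict_F[OF WF(1)[OF zin[OF s1(1) order.refl]] WF(1)[OF zin[OF s2(1,2)]]
              WF(1)[OF zin[OF sm(1,2)]] zne _ _ zm]) auto
      have st2: "Lj.psi (z sm) < 1/2 * Lj.psi (z s1) + (1 - 1/2) * Lj.psi (z s2)"
        by (rule Lj.leg_strict_F[OF WF(2)[OF zin[OF s1(1) order.refl]] WF(2)[OF zin[OF s2(1,2)]]
              WF(2)[OF zin[OF sm(1,2)]] zne _ _ zm]) auto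
      have "ri * Li.psi (z sm) < ri * (1/2 * Li.psi (z s1) + (1 - 1/2) * Li.psi (z s2))"
        using st1 r by simp
      moreover have "rj * Lj.psi (z sm) < rj * (1/2 * Lj.psi (z s1) + (1 - 1/2) * Lj.psi (z s2))"
        using st2 r by simp
      ultimately have "H (z sm) < 1/2 * H (z s1) + (1 - 1/2) * H (z s2)"
        unfolding H_def by (simp add: algebra_simps)
      then show False using zeq[OF s1(1) s1'] zeq[OF s2(1,3)] zeq[OF sm(1,3)] by simp
    qed
  qed
qed

end
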